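(* (Explicit solutions of the Lotka–Volterra lattice.) Let $M,N\ge1$. Let $\tilde P$ be an invertible $N\times N$ complex matrix, $\tilde R$ an $N\times N$ complex matrix, $U$ an $M\times 1$ and $V$ an $N\times1$ complex vector, and put $Q=VU^T$ ($N\times M$). Let $A,B$ be $N\times N$ and $C,D$ be $M\times N$ complex matrices satisfying $$QC+\tilde RA=-A\tilde P^{-1},\qquad QD+\tilde RB=-B\tilde P .$$ For $n\in\mathbb{Z}$ and $t$ in an interval, define $$\tilde X_n(t)=A+B\tilde P^{\,n}e^{t(\tilde P^{-1}-\tilde P)},\qquad Y_n(t)=C+D\tilde P^{\,n}e^{t(\tilde P^{-1}-\tilde P)},$$ and assume $\tilde X_n(t)$ is invertible for all $n$ and $t$. Set $\varphi_n=U^T Y_n\tilde X_n^{-1}V$ and $a_n=\varphi_{n+1}-\varphi_n-1$. Then $a_n$ solves the Lotka–Volterra lattice equation $$\frac{d a_n}{dt}=a_{n+1}a_n-a_n a_{n-1}\qquad (n\in\mathbb{Z}).$$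
   Context: $U^T$ denotes the transpose of $U$; $\tilde P^{\,n}$ is the $n$-th power of $\tilde P$ (negative powers via $\tilde P^{-1}$), and $e^{(\cdot)}$ is the matrix exponential. Note that $\tilde P^{\,n}$ and $e^{t(\tilde P^{-1}-\tilde P)}$ commute. *)

theory Defs
  imports "HOL-Analysis.Analysis"
begin

text \<open>Matrices are Cartesian-space matrices: a matrix with m rows and n columns over
  complex numbers has type complex^'n^'m; matrix product is (**).\<close>

primrec mat_pow :: "('a::semiring_1)^'n^'n \<Rightarrow> nat \<Rightarrow> 'a^'n^'n" where
  "mat_pow A 0 = mat 1"
| "mat_pow A (Suc k) = A ** mat_pow A k"

definition mat_ipow :: "('a::semiring_1)^'n^'n \<Rightarrow> int \<Rightarrow> 'a^'n^'n" where
  "mat_ipow A n = (if 0 \<le> n then mat_pow A (nat n) else mat_pow (matrix_inv A) (nat (- n)))"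

definition mat_exp :: "complex^'n^'n \<Rightarrow> complex^'n^'n" where
  "mat_exp A = (\<Sum>k. (1 / fact k) *\<^sub>R mat_pow A k)"

definition lv_E :: "complex^'n^'n \<Rightarrow> int \<Rightarrow> real \<Rightarrow> complex^'n^'n" where
  "lv_E P n t = mat_ipow P n ** mat_exp (t *\<^sub>R (matrix_inv P - P))"

definition lv_X :: "complex^'n^'n \<Rightarrow> complex^'n^'n \<Rightarrow> complex^'n^'n \<Rightarrow> int \<Rightarrow> real \<Rightarrow> complex^'n^'n" where
  "lv_X A B P n t = A + B ** lv_E P n t"

definition lv_Y :: "complex^'n^'m \<Rightarrow> complex^'n^'m \<Rightarrow> complex^'n^'n \<Rightarrow> int \<Rightarrow> real \<Rightarrow> complex^'n^'m" where
  "lv_Y C D P n t = C + D ** lv_E P n t"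

definition lv_phi :: "complex^'n^'n \<Rightarrow> complex^'n^'n \<Rightarrow> complex^'n^'m \<Rightarrow> complex^'n^'m \<Rightarrow>
    complex^'n^'n \<Rightarrow> complex^'m \<Rightarrow> complex^'n \<Rightarrow> int \<Rightarrow> real \<Rightarrow> complex" where
  "lv_phi A B C D P U V n t =
     (\<Sum>i\<in>UNIV. (U v* (lv_Y C D P n t ** matrix_inv (lv_X A B P n t))) $ i * V $ i)"

definition lv_a :: "complex^'n^'n \<Rightarrow> complex^'n^'n \<Rightarrow> complex^'n^'m \<Rightarrow> complex^'n^'m \<Rightarrow>
    complex^'n^'n \<Rightarrow> complex^'m \<Rightarrow> complex^'n \<Rightarrow> int \<Rightarrow> real \<Rightarrow> complex" where
  "lv_a A B C D P U V n t = lv_phi A B C D P U V (n + 1) t - lv_phi A B C D P U V n t - 1"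

end

theory Submission
  imports Defs
begin


lemma mm_add_r: "((A::'a::semiring_1^'n^'m) + B) ** C = A ** C + B ** C"
  by (vector matrix_matrix_mult_def sum.distrib[symmetric] field_simps)
lemma mm_diff_l: "(A::'a::ring_1^'n^'m) ** (B - C) = A ** B - A ** C"
  by (vector matrix_matrix_mult_def sum_subtractf[symmetric] field_simps)
lemma mm_diff_r: "((A::'a::ring_1^'n^'m) - B) ** C = A ** C - B ** C"
  by (vector matrix_matrix_mult_def sum_subtractf[symmetric] field_simps)
lemma mm_neg_l: "(- (A::'a::ring_1^'n^'m)) ** B = - (A ** B)"
  by (vector matrix_matrix_mult_def sum_negf[symmetric] field_simps)
lemma mm_neg_r: "(A::'a::ring_1^'n^'m) ** (- B) = - (A ** B)"
  by (vector matrix_matrix_mult_def sum_negf[symmetric] field_simps)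

lemma norm_le_l1_vec: "norm (x::'a::real_normed_vector^'n) \<le> (\<Sum>i\<in>UNIV. norm (x$i))"
  unfolding norm_vec_def by (rule L2_set_le_sum) auto

lemma bb_mm: "bounded_bilinear ((**) :: complex^'n^'m \<Rightarrow> complex^'p^'n \<Rightarrow> complex^'p^'m)"
proof
  fix a a' :: "complex^'n^'m" and b b' :: "complex^'p^'n" and r :: real
  show "(a + a') ** b = a ** b + a' ** b" by (rule mm_add_r)
  show "a ** (b + b') = a ** b + a ** b'" by (rule matrix_add_ldistrib)
  show "(r *\<^sub>R a) ** b = r *\<^sub>R (a ** b)" by (simp add: scalar_matrix_assoc)
  show "a ** (r *\<^sub>R b) = r *\<^sub>R (a ** b)" by (simp add: matrix_scalar_ac scalar_matrix_assoc)
next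
  show "\<exists>K. \<forall>a b. norm ((a::complex^'n^'m) ** (b::complex^'p^'n)) \<le> norm a * norm b * K"
  proof (intro exI allI)
    fix a :: "complex^'n^'m" and b :: "complex^'p^'n"
    have e: "norm ((a ** b)$i$j) \<le> of_nat CARD('n) * (norm a * norm b)" for i j
    proof -
      have "norm ((a ** b)$i$j) = norm (\<Sum>k\<in>UNIV. a$i$k * b$k$j)"
        by (simp add: matrix_matrix_mult_def)
      also have "\<dots> \<le> (\<Sum>k\<in>UNIV. norm (a$i$k * b$k$j))" by (rule norm_sum)
      also have "\<dots> \<le> (\<Sum>k\<in>(UNIV::'n set). norm a * norm b)"
      proof (rule sum_mono)
        fix k
        have "norm (a$i$k) \<le> norm a" by (rule order_trans[OF Finite_Cartesian_Product.norm_nth_le Finite_Cartesian_Product.norm_nth_le])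
        moreover have "norm (b$k$j) \<le> norm b" by (rule order_trans[OF Finite_Cartesian_Product.norm_nth_le Finite_Cartesian_Product.norm_nth_le])
        ultimately show "norm (a$i$k * b$k$j) \<le> norm a * norm b" 
          by (simp add: norm_mult mult_mono)
      qed
      finally show ?thesis by simp
    qed
    have "norm (a ** b) \<le> (\<Sum>i\<in>UNIV. norm ((a**b)$i))" by (rule norm_le_l1_vec)
    also have "\<dots> \<le> (\<Sum>i\<in>UNIV. \<Sum>j\<in>UNIV. norm ((a**b)$i$j))"
      by (intro sum_mono norm_le_l1_vec)
    also have "\<dots> \<le> (\<Sum>i\<in>(UNIV::'m set). \<Sum>j\<in>(UNIV::'p set). of_nat CARD('n) * (norm a * norm b))"
      by (intro sum_mono e)
    also have "\<dots> = norm a * norm b * (of_nat CARD('m) * of_nat CARD('p) * of_nat CARD('n))"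
      by simp
    finally show "norm (a ** b) \<le> norm a * norm b * (of_nat CARD('m) * of_nat CARD('p) * of_nat CARD('n))" .
  qed
qed



lemma bl_axis: "bounded_linear (\<lambda>x::'a::real_normed_vector. axis i x :: 'a^'n)"
proof (rule bounded_linear_intro[where K=1])
  fix x y :: 'a and r :: real
  show "axis i (x + y) = (axis i x + axis i y :: 'a^'n)" by (vector axis_def)
  show "axis i (r *\<^sub>R x) = r *\<^sub>R (axis i x :: 'a^'n)" by (vector axis_def)
  have "norm (axis i x :: 'a^'n) \<le> (\<Sum>j\<in>UNIV. norm ((axis i x :: 'a^'n)$j))" by (rule norm_le_l1_vec)
  also have "\<dots> = norm x" by (simp add: axis_def if_distrib cong: if_cong)
  finally show "norm (axis i x :: 'a^'n) \<le> norm x * 1" by simp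
qed

lemma vec_sum_axis: "(x::'a::comm_monoid_add^'n) = (\<Sum>i\<in>UNIV. axis i (x$i))"
  by (simp add: vec_eq_iff axis_def if_distrib cong: if_cong)

lemma vd_vec:
  fixes f :: "real \<Rightarrow> 'a::real_normed_vector^'n"
  assumes "\<And>i. ((\<lambda>s. f s $ i) has_vector_derivative f' $ i) F"
  shows "(f has_vector_derivative f') F"
proof -
  have "((\<lambda>s. \<Sum>i\<in>UNIV. axis i (f s $ i)) has_vector_derivative (\<Sum>i\<in>UNIV. axis i (f' $ i))) F"
    by (intro has_vector_derivative_sum bounded_linear.has_vector_derivative[OF bl_axis] assms)
  then show ?thesis by (simp flip: vec_sum_axis)
qed

lemma vd_nth:
  fixes f :: "real \<Rightarrow> 'a::real_normed_vector^'n"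
  assumes "(f has_vector_derivative f') F"
  shows "((\<lambda>s. f s $ i) has_vector_derivative f' $ i) F"
  using bounded_linear.has_vector_derivative[OF bounded_linear_vec_nth assms] .

lemma vd_mm:
  fixes F :: "real \<Rightarrow> complex^'n^'m" and G :: "real \<Rightarrow> complex^'p^'n"
  assumes "(F has_vector_derivative F') (at t within S)" "(G has_vector_derivative G') (at t within S)"
  shows "((\<lambda>s. F s ** G s) has_vector_derivative (F t ** G' + F' ** G t)) (at t within S)"
  using bounded_bilinear.has_vector_derivative[OF bb_mm assms] .

lemma vd_mm_const_l:
  fixes G :: "real \<Rightarrow> complex^'p^'n" and A :: "complex^'n^'m"
  assumes "(G has_vector_derivative G') F"
  shows "((\<lambda>s. A ** G s) has_vector_derivative (A ** G')) F"
  using bounded_linear.has_vector_derivative[OF bounded_bilinear.bounded_linear_right[OF bb_mm] assms] .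

lemma inv_props:
  fixes X :: "'a::semiring_1^'n^'n"
  assumes "invertible X"
  shows "X ** matrix_inv X = mat 1" "matrix_inv X ** X = mat 1"
  using someI_ex[OF assms[unfolded invertible_def]] unfolding matrix_inv_def by auto

lemma inv_entry:
  fixes X :: "complex^'n^'n"
  assumes "invertible X"
  shows "matrix_inv X $ k $ j = det (\<chi> i l. if l = k then (if i = j then 1 else 0) else X$i$l) / det X"
proof -
  have d: "det X \<noteq> 0" using assms invertible_det_nz by blast
  let ?x = "\<chi> k. matrix_inv X $ k $ j"
  let ?b = "\<chi> i. if i = j then 1 else (0::complex)"
  have "X *v ?x = ?b"
  proof -
    have "(X *v ?x) $ i = (X ** matrix_inv X) $ i $ j" for i
      by (simp add: matrix_vector_mult_def matrix_matrix_mult_def)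
    then show ?thesis using inv_props(1)[OF assms] by (simp add: vec_eq_iff mat_def)
  qed
  then have "?x = (\<chi> k. det(\<chi> i l. if l=k then ?b$i else X$i$l) / det X)"
    using cramer[OF d] by blast
  then have "?x $ k = det(\<chi> i l. if l=k then ?b$i else X$i$l) / det X" by simp
  moreover have "(\<chi> i l. if l=k then ?b$i else X$i$l) = (\<chi> i l. if l = k then (if i = j then 1 else 0) else X$i$l)"
    by (simp add: vec_eq_iff)
  ultimately show ?thesis by simp
qed

lemma det_differentiable:
  fixes F :: "real \<Rightarrow> complex^'n^'n"
  assumes "\<And>i j. (\<lambda>s. F s $ i $ j) differentiable (at t within S)"
  shows "(\<lambda>s. det (F s)) differentiable (at t within S)"
proof -
  have p: "(\<lambda>s. \<Prod>i\<in>A. F s $ i $ p i) differentiable (at t within S)" if "finite A" for A and p :: "'n \<Rightarrow> 'n"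
    using that
  proof (induction A rule: finite_induct)
    case empty then show ?case by simp
  next
    case (insert x A) then show ?case by (simp add: assms)
  qed
  show ?thesis unfolding det_def
    by (intro differentiable_sum differentiable_mult ballI p finite_permutations) auto
qed

lemma inv_differentiable:
  fixes X :: "real \<Rightarrow> complex^'n^'n"
  assumes X: "(X has_vector_derivative X') (at t within S)" and inv: "\<forall>s\<in>S. invertible (X s)"
    and t: "t \<in> S"
  shows "\<exists>W'. ((\<lambda>s. matrix_inv (X s)) has_vector_derivative W') (at t within S)"
proof -
  have ent: "(\<lambda>s. X s $ i $ j) differentiable (at t within S)" for i j
    using differentiableI_vector[OF vd_nth[OF vd_nth[OF X]]] .
  define g where "g k j s = det (\<chi> i l. if l = k then (if i = j then 1 else 0) else X s$i$l) / det (X s)" for k j s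
  have gd: "(g k j) differentiable (at t within S)" for k j
    unfolding g_def
  proof (intro differentiable_divide det_differentiable)
    show "(\<lambda>s. (\<chi> i l. if l = k then (if i = j then 1 else 0) else X s $ i $ l) $ a $ b) differentiable (at t within S)" for a b
      using ent by (cases "b = k") auto
    show "(\<lambda>s. X s $ a $ b) differentiable (at t within S)" for a b by (rule ent)
    show "det (X t) \<noteq> 0" using inv t invertible_det_nz by blast
  qed
  have eq: "matrix_inv (X s) $ k $ j = g k j s" if "s \<in> S" for s k j
    unfolding g_def using inv_entry inv that by blast
  define W' where "W' = (\<chi> k j. vector_derivative (g k j) (at t within S))"
  have "((\<lambda>s. matrix_inv (X s)) has_vector_derivative W') (at t within S)"
  proof (rule vd_vec)
    fix k
    show "((\<lambda>s. matrix_inv (X s) $ k) has_vector_derivative W' $ k) (at t within S)"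
    proof (rule vd_vec)
      fix j
      have d0: "(g k j has_vector_derivative W' $ k $ j) (at t within S)"
        using gd[of k j] unfolding vector_derivative_works W'_def by simp
      show "((\<lambda>s. matrix_inv (X s) $ k $ j) has_vector_derivative W' $ k $ j) (at t within S)"
        by (rule has_vector_derivative_transform[OF t _ d0]) (simp add: eq)
    qed
  qed
  then show ?thesis by blast
qed

lemma inv_deriv:
  fixes X :: "real \<Rightarrow> complex^'n^'n"
  assumes X: "(X has_vector_derivative X') (at t within S)" and inv: "\<forall>s\<in>S. invertible (X s)"
    and t: "t \<in> S"
  shows "((\<lambda>s. matrix_inv (X s)) has_vector_derivative
      (- (matrix_inv (X t) ** X' ** matrix_inv (X t)))) (at t within S)"
proof -
  obtain W' where W': "((\<lambda>s. matrix_inv (X s)) has_vector_derivative W') (at t within S)"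
    using inv_differentiable[OF assms] by blast
  let ?W = "\<lambda>s. matrix_inv (X s)"
  have i1: "X t ** ?W t = mat 1" and i2: "?W t ** X t = mat 1" using inv_props inv t by auto
  have "((\<lambda>s. (?W s + ?W s) - ?W s ** (X s ** ?W s)) has_vector_derivative
     ((W' + W') - (?W t ** (X t ** W' + X' ** ?W t) + W' ** (X t ** ?W t)))) (at t within S)"
    by (intro has_vector_derivative_diff has_vector_derivative_add W' vd_mm X)
  also have "((W' + W') - (?W t ** (X t ** W' + X' ** ?W t) + W' ** (X t ** ?W t)))
      = - (?W t ** X' ** ?W t)"
    by (simp add: matrix_add_ldistrib matrix_mul_assoc i1 i2 )
  finally have d: "((\<lambda>s. (?W s + ?W s) - ?W s ** (X s ** ?W s)) has_vector_derivative - (?W t ** X' ** ?W t)) (at t within S)" .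
  show ?thesis
  proof (rule has_vector_derivative_transform[OF t _ d])
    fix s assume "s \<in> S"
    then have "X s ** ?W s = mat 1" using inv_props inv by auto
    then show "?W s = (?W s + ?W s) - ?W s ** (X s ** ?W s)" by (simp add: )
  qed
qed



lemma mat_pow_comm:
  fixes A B :: "'a::semiring_1^'n^'n"
  assumes "A ** B = B ** A"
  shows "mat_pow A k ** B = B ** mat_pow A k"
proof (induction k)
  case 0 then show ?case by simp
next
  case (Suc k)
  have "mat_pow A (Suc k) ** B = A ** (mat_pow A k ** B)" by (simp add: matrix_mul_assoc)
  also have "\<dots> = (A ** B) ** mat_pow A k" by (simp add: Suc matrix_mul_assoc)
  also have "\<dots> = B ** mat_pow A (Suc k)" by (simp add: assms matrix_mul_assoc)
  finally show ?case .
qed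

lemma mat_pow_Suc': "mat_pow (A::'a::semiring_1^'n^'n) (Suc k) = mat_pow A k ** A"
  using mat_pow_comm[of A A k] by simp

lemma ipow_comm:
  fixes P B :: "'a::semiring_1^'n^'n"
  assumes "P ** B = B ** P" "matrix_inv P ** B = B ** matrix_inv P"
  shows "mat_ipow P n ** B = B ** mat_ipow P n"
  unfolding mat_ipow_def using mat_pow_comm assms by auto

lemma ipow_succ:
  fixes P :: "'a::semiring_1^'n^'n"
  assumes "invertible P"
  shows "mat_ipow P (n+1) = P ** mat_ipow P n"
proof (cases "0 \<le> n")
  case True
  then have "nat (n+1) = Suc (nat n)" by simp
  then show ?thesis using True by (simp add: mat_ipow_def)
next
  case False
  let ?Q = "matrix_inv P"
  have a: "mat_ipow P n = ?Q ** mat_pow ?Q (nat (-n-1))"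
  proof -
    have "nat (-n) = Suc (nat (-n-1))" using False by simp
    then show ?thesis using False by (simp add: mat_ipow_def)
  qed
  have b: "mat_ipow P (n+1) = mat_pow ?Q (nat (-n-1))"
    using False by (cases "n = -1") (auto simp: mat_ipow_def)
  show ?thesis using inv_props[OF assms] by (simp add: a b matrix_mul_assoc)
qed

lemma ipow_pred:
  fixes P :: "'a::semiring_1^'n^'n"
  assumes "invertible P"
  shows "mat_ipow P (n-1) = matrix_inv P ** mat_ipow P n"
proof -
  have "mat_ipow P n = P ** mat_ipow P (n-1)" using ipow_succ[OF assms, of "n-1"] by simp
  then show ?thesis using inv_props[OF assms] by (simp add: matrix_mul_assoc)
qed

lemma ipow_succ':
  fixes P :: "'a::semiring_1^'n^'n"
  assumes "invertible P"
  shows "mat_ipow P (n+1) = mat_ipow P n ** P"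
proof -
  have "P ** matrix_inv P = matrix_inv P ** P" using inv_props[OF assms] by simp
  then have "mat_ipow P n ** P = P ** mat_ipow P n" by (intro ipow_comm) (simp_all add: matrix_mul_assoc)
  then show ?thesis using ipow_succ[OF assms] by simp
qed

lemma ipow_pred':
  fixes P :: "'a::semiring_1^'n^'n"
  assumes "invertible P"
  shows "mat_ipow P (n-1) = mat_ipow P n ** matrix_inv P"
proof -
  have "P ** matrix_inv P = matrix_inv P ** P" using inv_props[OF assms] by simp
  then have "mat_ipow P n ** matrix_inv P = matrix_inv P ** mat_ipow P n"
    by (intro ipow_comm) (simp_all add: matrix_mul_assoc)
  then show ?thesis using ipow_pred[OF assms] by simp
qed

lemma mat_pow_scaleR: "mat_pow (r *\<^sub>R (K::complex^'n^'n)) k = (r^k) *\<^sub>R mat_pow K k"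
  by (induction k) (simp_all add: matrix_scalar_ac scalar_matrix_assoc[symmetric])

lemma mat_pow_norm:
  fixes M :: "complex^'n^'n"
  obtains c where "c \<ge> 0" "\<And>k. norm (mat_pow M k) \<le> norm (mat 1 :: complex^'n^'n) * c^k"
proof -
  obtain Kb where Kb: "Kb > 0" "\<And>a b. norm ((a::complex^'n^'n) ** (b::complex^'n^'n)) \<le> norm a * norm b * Kb"
    using bounded_bilinear.pos_bounded[OF bb_mm] by blast
  have "norm (mat_pow M k) \<le> norm (mat 1 :: complex^'n^'n) * (norm M * Kb)^k" for k
  proof (induction k)
    case 0 then show ?case by simp
  next
    case (Suc k)
    have "norm (mat_pow M (Suc k)) \<le> norm M * norm (mat_pow M k) * Kb" using Kb(2) by simp
    also have "\<dots> \<le> norm M * (norm (mat 1 :: complex^'n^'n) * (norm M * Kb)^k) * Kb"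
      using Suc Kb(1) by (intro mult_right_mono mult_left_mono) auto
    also have "\<dots> = norm (mat 1 :: complex^'n^'n) * (norm M * Kb)^Suc k" by (simp add: algebra_simps)
    finally show ?case .
  qed
  then show ?thesis using that[of "norm M * Kb"] Kb(1) by simp
qed

lemma exp_summable: "summable (\<lambda>k. (1 / fact k) *\<^sub>R mat_pow (M::complex^'n^'n) k)"
proof -
  obtain c where c: "c \<ge> 0" "\<And>k. norm (mat_pow M k) \<le> norm (mat 1 :: complex^'n^'n) * c^k"
    using mat_pow_norm by blast
  have s: "summable (\<lambda>k. norm (mat 1 :: complex^'n^'n) * (inverse (fact k) * c^k))"
    by (intro summable_mult summable_exp)
  show ?thesis
  proof (rule summable_comparison_test'[OF s])
    fix k :: nat
    have "norm ((1 / fact k) *\<^sub>R mat_pow M k) = inverse (fact k) * norm (mat_pow M k)"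
      by (simp add: field_simps)
    also have "\<dots> \<le> inverse (fact k) * (norm (mat 1 :: complex^'n^'n) * c^k)"
      using c(2) by (intro mult_left_mono) auto
    finally show "norm ((1 / fact k) *\<^sub>R mat_pow M k) \<le> norm (mat 1 :: complex^'n^'n) * (inverse (fact k) * c^k)"
      by (simp add: algebra_simps)
  qed
qed

lemma exp_mult_l: "A ** mat_exp M = (\<Sum>k. (1 / fact k) *\<^sub>R (A ** mat_pow (M::complex^'n^'n) k))"
  unfolding mat_exp_def
  using bounded_linear.suminf[OF bounded_bilinear.bounded_linear_right[OF bb_mm, of A] exp_summable[of M]]
  by (simp add: matrix_scalar_ac scalar_matrix_assoc[symmetric])

lemma exp_mult_r: "mat_exp M ** A = (\<Sum>k. (1 / fact k) *\<^sub>R (mat_pow (M::complex^'n^'n) k ** A))"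
  unfolding mat_exp_def
  using bounded_linear.suminf[OF bounded_bilinear.bounded_linear_left[OF bb_mm, of A] exp_summable[of M]]
  by (simp add: scalar_matrix_assoc[symmetric])

lemma exp_comm:
  fixes A M :: "complex^'n^'n"
  assumes "A ** M = M ** A"
  shows "A ** mat_exp M = mat_exp M ** A"
  unfolding exp_mult_l exp_mult_r using mat_pow_comm[OF assms[symmetric]] by simp



lemma bl_entry: "bounded_linear (\<lambda>A::'a::real_normed_vector^'n^'m. A $ i $ j)"
  by (rule bounded_linear_compose[OF bounded_linear_vec_nth bounded_linear_vec_nth])

lemma entry_scaleR: "((a::real) *\<^sub>R (X::complex^'n^'m))$i$j = complex_of_real a * X$i$j"
proof -
  have "((a::real) *\<^sub>R (X::complex^'n^'m))$i$j = a *\<^sub>R (X$i$j)" by simp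
  also have "\<dots> = complex_of_real a * X$i$j" by (simp add: scaleR_conv_of_real)
  finally show ?thesis .
qed

lemma suminf_entry:
  fixes g :: "nat \<Rightarrow> 'a::real_normed_vector^'n^'m"
  assumes "summable g"
  shows "(suminf g) $ i $ j = (\<Sum>k. g k $ i $ j)"
  using bounded_linear.suminf[OF bl_entry assms] .

lemma exp_deriv:
  fixes K :: "complex^'n^'n"
  shows "((\<lambda>s. mat_exp (s *\<^sub>R K)) has_vector_derivative (K ** mat_exp (t *\<^sub>R K))) (at t within S)"
proof (rule vd_vec)
  fix i
  show "((\<lambda>s. mat_exp (s *\<^sub>R K) $ i) has_vector_derivative (K ** mat_exp (t *\<^sub>R K)) $ i) (at t within S)"
  proof (rule vd_vec)
    fix j
    define c where "c k = complex_of_real (1 / fact k) * mat_pow K k $ i $ j" for k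
    have ent: "mat_exp (s *\<^sub>R K) $ i $ j = (\<Sum>k. c k * (of_real s)^k)" for s
      unfolding mat_exp_def suminf_entry[OF exp_summable]
      apply (simp add: mat_pow_scaleR c_def)
      apply (simp add: scaleR_conv_of_real field_simps)
      done
    obtain cc where cc: "cc \<ge> 0" "\<And>k. norm (mat_pow K k) \<le> norm (mat 1 :: complex^'n^'n) * cc^k"
      using mat_pow_norm by blast
    have summ: "summable (\<lambda>k. c k * y^k)" for y
    proof (rule summable_comparison_test'[OF summable_mult[OF summable_exp[of "cc * norm y"]]])
      fix k :: nat
      have e: "norm (mat_pow K k $ i $ j) \<le> norm (mat_pow K k)"
        by (rule order_trans[OF Finite_Cartesian_Product.norm_nth_le Finite_Cartesian_Product.norm_nth_le])
      have nf: "norm (complex_of_real (1 / fact k)) = inverse (fact k)" by (simp only: norm_of_real) (simp add: divide_inverse)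
      have "norm (c k * y^k) = inverse (fact k) * norm (mat_pow K k $ i $ j) * norm y ^ k"
        unfolding c_def norm_mult norm_power nf ..
      also have "\<dots> \<le> inverse (fact k) * (norm (mat 1 :: complex^'n^'n) * cc^k) * norm y ^ k"
        using order_trans[OF e cc(2)] by (intro mult_right_mono mult_left_mono) auto
      also have "\<dots> = norm (mat 1 :: complex^'n^'n) * (inverse (fact k) * (cc * norm y)^k)"
        by (simp add: power_mult_distrib)
      finally show "norm (c k * y^k) \<le> norm (mat 1 :: complex^'n^'n) * (inverse (fact k) * (cc * norm y)^k)" .
    qed
    have der: "((\<lambda>z. \<Sum>k. c k * z^k) has_field_derivative (\<Sum>k. diffs c k * (of_real t)^k)) (at (of_real t))"
      by (rule termdiffs_strong_converges_everywhere[OF summ])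
    have d2: "((\<lambda>s. \<Sum>k. c k * (of_real s)^k) has_vector_derivative (\<Sum>k. diffs c k * (of_real t)^k)) (at t within S)"
      by (rule has_vector_derivative_real_field[OF der])
    have val: "(K ** mat_exp (t *\<^sub>R K)) $ i $ j = (\<Sum>k. diffs c k * (of_real t)^k)"
    proof -
      have sm: "summable (\<lambda>k. (1 / fact k) *\<^sub>R (K ** mat_pow (t *\<^sub>R K) k))"
        using bounded_linear.summable[OF bounded_bilinear.bounded_linear_right[OF bb_mm, of K] exp_summable[of "t *\<^sub>R K"]]
        by (simp add: matrix_scalar_ac scalar_matrix_assoc[symmetric])
      have "(K ** mat_exp (t *\<^sub>R K)) $ i $ j = (\<Sum>k. ((1 / fact k) *\<^sub>R (K ** mat_pow (t *\<^sub>R K) k)) $ i $ j)"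
        unfolding exp_mult_l suminf_entry[OF sm] ..
      also have "\<dots> = (\<Sum>k. diffs c k * (of_real t)^k)"
      proof (rule suminf_cong)
        fix k
        have "complex_of_nat (Suc k) \<noteq> 0" by (simp only: of_nat_eq_0_iff)
        then have nz: "1 + complex_of_nat k \<noteq> 0" by simp
        have fr: "(1::real) / fact k = of_nat (Suc k) * (1 / fact (Suc k))"
          by (simp add: fact_Suc)
        have f: "complex_of_real (1 / fact k) = of_nat (Suc k) * complex_of_real (1 / fact (Suc k))"
          by (subst fr) (simp only: of_real_mult of_real_of_nat_eq)
        show "((1 / fact k) *\<^sub>R (K ** mat_pow (t *\<^sub>R K) k)) $ i $ j = diffs c k * (of_real t)^k"
          apply (simp add: diffs_def c_def mat_pow_scaleR matrix_scalar_ac scalar_matrix_assoc[symmetric])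
          using nz apply (simp add: scaleR_conv_of_real f field_simps)
          done
      qed
      finally show ?thesis .
    qed
    show "((\<lambda>s. mat_exp (s *\<^sub>R K) $ i $ j) has_vector_derivative (K ** mat_exp (t *\<^sub>R K)) $ i $ j) (at t within S)"
      unfolding ent val by (rule d2)
  qed
qed



lemmas mm_simps = matrix_add_ldistrib mm_add_r mm_diff_l mm_diff_r mm_neg_l mm_neg_r matrix_mul_assoc
  matrix_mul_lid matrix_mul_rid

lemma key_identity:
  fixes P Pi F A B R W0 W1 W2 :: "complex^'n^'n" and C D :: "complex^'n^'m" and Q :: "complex^'m^'n"
  assumes PPi: "P ** Pi = mat 1" and PiP: "Pi ** P = mat 1" and FP: "F ** P = P ** F"
    and hC: "Q ** C + R ** A = - (A ** Pi)" and hD: "Q ** D + R ** B = - (B ** P)"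
    and X0: "(A + B ** (Pi ** F)) ** W0 = mat 1" "W0 ** (A + B ** (Pi ** F)) = mat 1"
    and X1: "(A + B ** F) ** W1 = mat 1" "W1 ** (A + B ** F) = mat 1"
    and X2: "(A + B ** (P ** F)) ** W2 = mat 1" "W2 ** (A + B ** (P ** F)) = mat 1"
  shows "((C + D ** (P ** F)) ** W2 - (C + D ** F) ** W1) ** Q ** ((C + D ** F) ** W1 - (C + D ** (Pi ** F)) ** W0)
     = ((C + D ** (P ** F)) ** W2 - (C + D ** (Pi ** F)) ** W0)
       + (D - (C + D ** F) ** W1 ** B) ** (Pi ** F - P ** F) ** W1"
proof -
  have FPi: "F ** Pi = Pi ** F"
  proof -
    have "F ** Pi = Pi ** P ** F ** Pi" by (simp add: PiP)
    also have "\<dots> = Pi ** (F ** P) ** Pi" by (simp add: FP matrix_mul_assoc)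
    also have "\<dots> = Pi ** F" by (simp add: PPi matrix_mul_assoc[symmetric])
    finally show ?thesis .
  qed
  define S0 where "S0 = (C + D ** (Pi ** F)) ** W0"
  define S1 where "S1 = (C + D ** F) ** W1"
  define S2 where "S2 = (C + D ** (P ** F)) ** W2"
  define L1 where "L1 = D - S1 ** B"
  define L2 where "L2 = D - S2 ** B"
  define M where "M = W1 ** B"
  define N1 where "N1 = P ** F - F"
  define N2 where "N2 = F - Pi ** F"
  have S2A: "S2 ** A = C + D ** P ** F - S2 ** B ** P ** F"
  proof -
    have "S2 ** (A + B ** (P ** F)) = C + D ** (P ** F)"
      unfolding S2_def by (simp add: matrix_mul_assoc[symmetric] X2)
    then show ?thesis by (simp add: mm_simps algebra_simps)
  qed
  have S1A: "S1 ** A = C + D ** F - S1 ** B ** F"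
  proof -
    have "S1 ** (A + B ** F) = C + D ** F"
      unfolding S1_def by (simp add: matrix_mul_assoc[symmetric] X1)
    then show ?thesis by (simp add: mm_simps algebra_simps)
  qed
  have S1W: "S1 ** (A + B ** F) ** W1 = S1" by (simp add: matrix_mul_assoc[symmetric] X1)
  have S0W: "S0 ** (A + B ** (Pi ** F)) ** W0 = S0" by (simp add: matrix_mul_assoc[symmetric] X0)
  have s1: "S2 - S1 = L2 ** N1 ** W1"
  proof -
    have "S2 ** (A + B ** F) - (C + D ** F) = L2 ** N1"
      unfolding L2_def N1_def by (simp add: mm_simps S2A algebra_simps)
    then have "(S2 ** (A + B ** F) - (C + D ** F)) ** W1 = L2 ** N1 ** W1" by simp
    moreover have "(S2 ** (A + B ** F) - (C + D ** F)) ** W1 = S2 - S1"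
      unfolding S1_def by (simp add: mm_diff_r matrix_mul_assoc[symmetric] X1)
    ultimately show ?thesis by simp
  qed
  have s0: "S1 - S0 = L1 ** N2 ** W0"
  proof -
    have "S1 ** (A + B ** (Pi ** F)) - (C + D ** (Pi ** F)) = L1 ** N2"
      unfolding L1_def N2_def by (simp add: mm_simps S1A algebra_simps)
    then have "(S1 ** (A + B ** (Pi ** F)) - (C + D ** (Pi ** F))) ** W0 = L1 ** N2 ** W0" by simp
    moreover have "(S1 ** (A + B ** (Pi ** F)) - (C + D ** (Pi ** F))) ** W0 = S1 - S0"
      unfolding S0_def by (simp add: mm_diff_r matrix_mul_assoc[symmetric] X0)
    ultimately show ?thesis by simp
  qed
  have hL: "L2 + L2 ** N1 ** M = L1"
  proof -
    have "L2 - L1 = - ((S2 - S1) ** B)" unfolding L1_def L2_def by (simp add: mm_simps)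
    also have "\<dots> = - (L2 ** N1 ** M)" unfolding s1 M_def by (simp add: matrix_mul_assoc)
    finally show ?thesis by (simp add: algebra_simps)
  qed
  have hW: "W0 - M ** N2 ** W0 = W1"
  proof -
    have "W1 ** (A + B ** (Pi ** F)) = mat 1 - M ** N2"
    proof -
      have "W1 ** (A + B ** (Pi ** F)) = W1 ** (A + B ** F) - W1 ** B ** (F - Pi ** F)"
        by (simp add: mm_simps algebra_simps)
      then show ?thesis unfolding M_def N2_def using X1(2) by simp
    qed
    then have "W1 ** (A + B ** (Pi ** F)) ** W0 = (mat 1 - M ** N2) ** W0" by simp
    then show ?thesis by (simp add: matrix_mul_assoc[symmetric] X0 mm_diff_r)
  qed
  have qc: "Q ** C = - (A ** Pi) - R ** A" unfolding hC[symmetric] by simp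
  have qd: "Q ** D = - (B ** P) - R ** B" unfolding hD[symmetric] by simp
  have QS1: "Q ** S1 = - ((A ** Pi + B ** (P ** F)) ** W1) - R"
  proof -
    have "Q ** (C + D ** F) = - (A ** Pi + B ** (P ** F)) - R ** (A + B ** F)"
    proof -
      have "Q ** (C + D ** F) = Q ** C + Q ** D ** F" by (simp add: mm_simps)
      also have "\<dots> = (- (A ** Pi) - R ** A) + (- (B ** P) - R ** B) ** F"
        by (simp only: qc qd)
      also have "\<dots> = - (A ** Pi + B ** (P ** F)) - R ** (A + B ** F)"
        by (simp add: mm_simps algebra_simps)
      finally show ?thesis .
    qed
    note prev = this
    have r1: "R ** (A + B ** F) ** W1 = R" by (simp add: matrix_mul_assoc[symmetric] X1)
    have "Q ** S1 = Q ** (C + D ** F) ** W1" unfolding S1_def by (simp add: matrix_mul_assoc)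
    also have "\<dots> = (- (A ** Pi + B ** (P ** F)) - R ** (A + B ** F)) ** W1" using prev by simp
    also have "\<dots> = - ((A ** Pi + B ** (P ** F)) ** W1) - R ** (A + B ** F) ** W1" by (simp add: mm_diff_r mm_neg_l mm_add_r)
    also have "\<dots> = - ((A ** Pi + B ** (P ** F)) ** W1) - R" using r1 by simp
    finally show ?thesis .
  qed
  have W1A: "W1 ** A = mat 1 - M ** F"
    using X1(2) unfolding M_def by (simp add: mm_simps algebra_simps)
  have syl: "W1 ** Q ** L1 = Pi ** M - M ** P + M ** (N1 + N2) ** M"
  proof -
    have "Q ** L1 = (A ** Pi + B ** (P ** F)) ** M - B ** P"
    proof -
      have "Q ** L1 = Q ** D - Q ** S1 ** B" unfolding L1_def by (simp add: mm_simps)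
      also have "\<dots> = (- (B ** P) - R ** B) + ((A ** Pi + B ** (P ** F)) ** W1 + R) ** B"
        by (simp only: qd QS1 mm_simps) (simp add: algebra_simps)
      also have "\<dots> = (A ** Pi + B ** (P ** F)) ** M - B ** P"
        unfolding M_def by (simp add: mm_simps algebra_simps)
      finally show ?thesis .
    qed
    then have "W1 ** (Q ** L1) = W1 ** ((A ** Pi + B ** (P ** F)) ** M - B ** P)" by simp
    then have "W1 ** Q ** L1 = W1 ** A ** Pi ** M + M ** P ** F ** M - M ** P"
      unfolding M_def by (simp add: mm_simps algebra_simps)
    also have "\<dots> = Pi ** M - M ** F ** Pi ** M + M ** P ** F ** M - M ** P"
      by (simp add: W1A mm_simps algebra_simps)
    also have "\<dots> = Pi ** M - M ** P + M ** (N1 + N2) ** M"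
      unfolding N1_def N2_def
      by (simp add: mm_simps algebra_simps FPi[symmetric])
    finally show ?thesis .
  qed
  have N1Pi: "N1 ** Pi = N2"
  proof -
    have "N1 ** Pi = P ** (F ** Pi) - F ** Pi" unfolding N1_def by (simp add: mm_diff_r matrix_mul_assoc[symmetric])
    also have "\<dots> = P ** (Pi ** F) - Pi ** F" by (simp add: FPi)
    also have "\<dots> = N2" unfolding N2_def by (simp add: matrix_mul_assoc PPi)
    finally show ?thesis .
  qed
  have PN2: "P ** N2 = N1" unfolding N1_def N2_def
    by (simp add: mm_simps PPi)
  have "(S2 - S1) ** Q ** (S1 - S0) = L2 ** N1 ** (W1 ** Q ** L1) ** N2 ** W0"
    unfolding s1 s0 by (simp add: matrix_mul_assoc)
  also have "\<dots> = L2 ** (N1 ** Pi) ** M ** N2 ** W0 - L2 ** N1 ** M ** (P ** N2) ** W0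
      + L2 ** N1 ** M ** (N1 + N2) ** M ** N2 ** W0"
    unfolding syl by (simp add: mm_simps)
  also have "\<dots> = (L2 + L2 ** N1 ** M) ** N2 ** M ** N2 ** W0 - L2 ** N1 ** M ** N1 ** (W0 - M ** N2 ** W0)"
    unfolding N1Pi PN2 by (simp add: mm_simps algebra_simps)
  also have "\<dots> = L1 ** N2 ** (M ** N2 ** W0) - (L2 ** N1 ** M) ** N1 ** W1"
    unfolding hL hW by (simp add: matrix_mul_assoc)
  also have "\<dots> = L1 ** N2 ** (W0 - W1) - (L1 - L2) ** N1 ** W1"
  proof -
    have a: "M ** N2 ** W0 = W0 - W1" using hW by (simp add: algebra_simps)
    have b: "L2 ** N1 ** M = L1 - L2" using hL by (simp add: algebra_simps)
    show ?thesis unfolding a b ..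
  qed
  also have "\<dots> = (S1 - S0) + (S2 - S1) - L1 ** (N1 + N2) ** W1"
    unfolding s0 s1 by (simp add: mm_simps algebra_simps)
  also have "\<dots> = (S2 - S0) + L1 ** (Pi ** F - P ** F) ** W1"
  proof -
    have e: "N1 + N2 = - (Pi ** F - P ** F)" unfolding N1_def N2_def by simp
    show ?thesis unfolding e by (simp only: mm_neg_r mm_neg_l) (simp add: algebra_simps)
  qed
  finally show ?thesis unfolding S0_def S1_def S2_def L1_def .
qed



definition ipf :: "complex^'m \<Rightarrow> complex^'n^'m \<Rightarrow> complex^'n \<Rightarrow> complex" where
  "ipf U M V = (\<Sum>i\<in>UNIV. (U v* M) $ i * V $ i)"

lemma bl_ipf:
  fixes U :: "complex^'m" and V :: "complex^'n"
  shows "bounded_linear (\<lambda>M::complex^'n^'m. ipf U M V)"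
proof -
  have "bounded_linear (\<lambda>M::complex^'n^'m. \<Sum>i\<in>UNIV. (\<Sum>j\<in>UNIV. U$j * M$j$i) * V $ i)"
    by (intro bounded_linear_sum bounded_linear_mult_const bounded_linear_const_mult bl_entry)
  then show ?thesis unfolding ipf_def vector_matrix_mult_def by simp
qed

lemma ipf_add: "ipf U (M1 + M2) V = ipf U M1 V + ipf U M2 V"
  using linear_add[OF bounded_linear.linear[OF bl_ipf]] by blast
lemma ipf_diff: "ipf U (M1 - M2) V = ipf U M1 V - ipf U M2 V"
  using linear_diff[OF bounded_linear.linear[OF bl_ipf]] by blast

lemma ipf_factor:
  fixes Z1 Z2 :: "complex^'n^'m" and U :: "complex^'m" and V :: "complex^'n"
  shows "ipf U (Z1 ** (\<chi> i j. V $ i * U $ j :: complex^'m^'n) ** Z2) V = ipf U Z1 V * ipf U Z2 V"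
proof -
  let ?Q = "(\<chi> i j. V $ i * U $ j :: complex^'m^'n)"
  have q: "w v* ?Q = (\<Sum>b\<in>UNIV. w$b * V$b) *s U" for w :: "complex^'n"
    by (simp add: vec_eq_iff vector_matrix_mult_def sum_distrib_left mult_ac)
  have "U v* (Z1 ** ?Q ** Z2) = ((U v* Z1) v* ?Q) v* Z2" by (simp add: vector_matrix_mul_assoc)
  also have "\<dots> = ipf U Z1 V *s (U v* Z2)" unfolding q ipf_def by (simp add: scalar_vector_matrix_assoc)
  finally show ?thesis unfolding ipf_def by (simp add: sum_distrib_left mult_ac)
qed



lemma E_shift:
  fixes P :: "complex^'n^'n"
  assumes P: "invertible P"
  shows "lv_E P (n+1) t = P ** lv_E P n t" "lv_E P (n-1) t = matrix_inv P ** lv_E P n t"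
    "lv_E P n t ** P = P ** lv_E P n t"
proof -
  show "lv_E P (n+1) t = P ** lv_E P n t" unfolding lv_E_def ipow_succ[OF P] by (simp add: matrix_mul_assoc)
  show "lv_E P (n-1) t = matrix_inv P ** lv_E P n t" unfolding lv_E_def ipow_pred[OF P] by (simp add: matrix_mul_assoc)
  let ?K = "t *\<^sub>R (matrix_inv P - P)"
  have c1: "P ** ?K = ?K ** P"
    using inv_props[OF P] by (simp add: matrix_scalar_ac scalar_matrix_assoc[symmetric] mm_diff_l mm_diff_r scaleR_diff_right)
  have c2: "mat_ipow P n ** P = P ** mat_ipow P n" using ipow_succ[OF P] ipow_succ'[OF P] by metis
  have "lv_E P n t ** P = mat_ipow P n ** (mat_exp ?K ** P)" unfolding lv_E_def by (simp add: matrix_mul_assoc)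
  also have "\<dots> = mat_ipow P n ** P ** mat_exp ?K" unfolding exp_comm[OF c1, symmetric] by (simp add: matrix_mul_assoc)
  also have "\<dots> = P ** lv_E P n t" unfolding c2 lv_E_def by (simp add: matrix_mul_assoc)
  finally show "lv_E P n t ** P = P ** lv_E P n t" .
qed

lemma E_deriv:
  fixes P :: "complex^'n^'n"
  assumes P: "invertible P"
  shows "((\<lambda>s. lv_E P n s) has_vector_derivative (lv_E P (n-1) t - lv_E P (n+1) t)) (at t within S)"
proof -
  let ?K = "matrix_inv P - P"
  have "((\<lambda>s. mat_ipow P n ** mat_exp (s *\<^sub>R ?K)) has_vector_derivative
      mat_ipow P n ** (?K ** mat_exp (t *\<^sub>R ?K))) (at t within S)"
    by (intro vd_mm_const_l exp_deriv)
  also have "mat_ipow P n ** (?K ** mat_exp (t *\<^sub>R ?K)) = lv_E P (n-1) t - lv_E P (n+1) t"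
    unfolding lv_E_def ipow_pred'[OF P] ipow_succ'[OF P]
    by (simp add: mm_diff_l mm_diff_r matrix_mul_assoc)
  finally show ?thesis unfolding lv_E_def .
qed

lemma X_deriv:
  fixes P A B :: "complex^'n^'n"
  assumes P: "invertible P"
  shows "((\<lambda>s. lv_X A B P n s) has_vector_derivative (B ** (lv_E P (n-1) t - lv_E P (n+1) t))) (at t within S)"
  unfolding lv_X_def
  using has_vector_derivative_add[OF has_vector_derivative_const vd_mm_const_l[OF E_deriv[OF P]]] by simp

lemma Y_deriv:
  fixes P :: "complex^'n^'n" and C D :: "complex^'n^'m"
  assumes P: "invertible P"
  shows "((\<lambda>s. lv_Y C D P n s) has_vector_derivative (D ** (lv_E P (n-1) t - lv_E P (n+1) t))) (at t within S)"
  unfolding lv_Y_def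
  using has_vector_derivative_add[OF has_vector_derivative_const vd_mm_const_l[OF E_deriv[OF P]]] by simp

lemma phi_deriv:
  fixes P R A B :: "complex^'n^'n"
    and C D :: "complex^'n^'m"
    and U :: "complex^'m" and V :: "complex^'n"
    and I :: "real set"
  assumes P: "invertible P"
    and hC: "(\<chi> i j. V $ i * U $ j :: complex^'m^'n) ** C + R ** A = - (A ** matrix_inv P)"
    and hD: "(\<chi> i j. V $ i * U $ j :: complex^'m^'n) ** D + R ** B = - (B ** P)"
    and inv: "\<forall>n. \<forall>t\<in>I. invertible (lv_X A B P n t)"
    and t: "t \<in> I"
  shows "((\<lambda>s. lv_phi A B C D P U V m s) has_vector_derivative
     ((lv_phi A B C D P U V (m+1) t - lv_phi A B C D P U V m t) *
      (lv_phi A B C D P U V m t - lv_phi A B C D P U V (m-1) t)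
      - (lv_phi A B C D P U V (m+1) t - lv_phi A B C D P U V (m-1) t))) (at t within I)"
proof -
  let ?Q = "(\<chi> i j. V $ i * U $ j :: complex^'m^'n)"
  let ?Pi = "matrix_inv P"
  define F where "F = lv_E P m t"
  define W0 where "W0 = matrix_inv (lv_X A B P (m-1) t)"
  define W1 where "W1 = matrix_inv (lv_X A B P m t)"
  define W2 where "W2 = matrix_inv (lv_X A B P (m+1) t)"
  have E0: "lv_E P (m-1) t = ?Pi ** F" and E2: "lv_E P (m+1) t = P ** F" and FP: "F ** P = P ** F"
    using E_shift[OF P] unfolding F_def by auto
  have X0: "lv_X A B P (m-1) t = A + B ** (?Pi ** F)" and X1: "lv_X A B P m t = A + B ** F"
    and X2: "lv_X A B P (m+1) t = A + B ** (P ** F)"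
    unfolding lv_X_def E0 E2 F_def by simp_all
  have Y0: "lv_Y C D P (m-1) t = C + D ** (?Pi ** F)" and Y1: "lv_Y C D P m t = C + D ** F"
    and Y2: "lv_Y C D P (m+1) t = C + D ** (P ** F)"
    unfolding lv_Y_def E0 E2 F_def by simp_all
  have i0: "invertible (lv_X A B P (m-1) t)" and i1: "invertible (lv_X A B P m t)"
    and i2: "invertible (lv_X A B P (m+1) t)" using inv t by auto
  have invI: "\<forall>s\<in>I. invertible (lv_X A B P m s)" using inv by auto
  let ?G = "lv_E P (m-1) t - lv_E P (m+1) t"
  have Wd: "((\<lambda>s. matrix_inv (lv_X A B P m s)) has_vector_derivative
      - (W1 ** (B ** ?G) ** W1)) (at t within I)"
    unfolding W1_def by (rule inv_deriv[OF X_deriv[OF P] invI t])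
  have Sd: "((\<lambda>s. lv_Y C D P m s ** matrix_inv (lv_X A B P m s)) has_vector_derivative
      (lv_Y C D P m t ** (- (W1 ** (B ** ?G) ** W1)) + D ** ?G ** W1)) (at t within I)"
    using vd_mm[OF Y_deriv[OF P] Wd] unfolding W1_def .
  have phid: "((\<lambda>s. lv_phi A B C D P U V m s) has_vector_derivative
      ipf U (lv_Y C D P m t ** (- (W1 ** (B ** ?G) ** W1)) + D ** ?G ** W1) V) (at t within I)"
    using bounded_linear.has_vector_derivative[OF bl_ipf Sd] unfolding lv_phi_def ipf_def .
  have key: "((C + D ** (P ** F)) ** W2 - (C + D ** F) ** W1) ** ?Q ** ((C + D ** F) ** W1 - (C + D ** (?Pi ** F)) ** W0)
     = ((C + D ** (P ** F)) ** W2 - (C + D ** (?Pi ** F)) ** W0)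
       + (D - (C + D ** F) ** W1 ** B) ** (?Pi ** F - P ** F) ** W1"
    by (rule key_identity[OF inv_props[OF P] FP hC hD])
       (simp_all add: W0_def W1_def W2_def inv_props[OF i0] inv_props[OF i1] inv_props[OF i2] flip: X0 X1 X2)
  have der_eq: "lv_Y C D P m t ** (- (W1 ** (B ** ?G) ** W1)) + D ** ?G ** W1
      = (D - (C + D ** F) ** W1 ** B) ** (?Pi ** F - P ** F) ** W1"
    unfolding Y1 E0 E2 by (simp add: mm_simps algebra_simps)
  have phis: "lv_phi A B C D P U V (m-1) t = ipf U ((C + D ** (?Pi ** F)) ** W0) V"
     "lv_phi A B C D P U V m t = ipf U ((C + D ** F) ** W1) V"
     "lv_phi A B C D P U V (m+1) t = ipf U ((C + D ** (P ** F)) ** W2) V"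
    unfolding lv_phi_def ipf_def W0_def W1_def W2_def Y0 Y1 Y2 by simp_all
  have "ipf U (lv_Y C D P m t ** (- (W1 ** (B ** ?G) ** W1)) + D ** ?G ** W1) V
      = ipf U (((C + D ** (P ** F)) ** W2 - (C + D ** F) ** W1) ** ?Q ** ((C + D ** F) ** W1 - (C + D ** (?Pi ** F)) ** W0)
          - ((C + D ** (P ** F)) ** W2 - (C + D ** (?Pi ** F)) ** W0)) V"
    unfolding der_eq key by simp
  also have "\<dots> = (lv_phi A B C D P U V (m+1) t - lv_phi A B C D P U V m t) *
      (lv_phi A B C D P U V m t - lv_phi A B C D P U V (m-1) t)
      - (lv_phi A B C D P U V (m+1) t - lv_phi A B C D P U V (m-1) t)"
    unfolding phis ipf_diff ipf_factor ..
  finally show ?thesis using phid by simp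
qed



theorem mainTheorem8:
  fixes P R A B :: "complex^'n^'n"
    and C D :: "complex^'n^'m"
    and U :: "complex^'m" and V :: "complex^'n"
    and I :: "real set"
  assumes "invertible P"
    and "is_interval I"
    and "(\<chi> i j. V $ i * U $ j :: complex^'m^'n) ** C + R ** A = - (A ** matrix_inv P)"
    and "(\<chi> i j. V $ i * U $ j :: complex^'m^'n) ** D + R ** B = - (B ** P)"
    and "\<forall>n. \<forall>t\<in>I. invertible (lv_X A B P n t)"
  shows "\<forall>n. \<forall>t\<in>I.
    ((\<lambda>s. lv_a A B C D P U V n s) has_vector_derivative
       (lv_a A B C D P U V (n + 1) t * lv_a A B C D P U V n t
        - lv_a A B C D P U V n t * lv_a A B C D P U V (n - 1) t)) (at t within I)"
proof (intro allI ballI)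
  fix n :: int and t assume t: "t \<in> I"
  let ?p = "\<lambda>k. lv_phi A B C D P U V k t"
  note d1 = phi_deriv[OF assms(1) assms(3) assms(4) assms(5) t, of "n+1"]
  note d0 = phi_deriv[OF assms(1) assms(3) assms(4) assms(5) t, of n]
  have d: "((\<lambda>s. lv_phi A B C D P U V (n+1) s - lv_phi A B C D P U V n s - 1) has_vector_derivative
     (((?p (n+1+1) - ?p (n+1)) * (?p (n+1) - ?p (n+1-1)) - (?p (n+1+1) - ?p (n+1-1)))
      - ((?p (n+1) - ?p n) * (?p n - ?p (n-1)) - (?p (n+1) - ?p (n-1))) - 0)) (at t within I)"
    by (intro has_vector_derivative_diff d1 d0 has_vector_derivative_const)
  have e: "(((?p (n+1+1) - ?p (n+1)) * (?p (n+1) - ?p (n+1-1)) - (?p (n+1+1) - ?p (n+1-1)))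
      - ((?p (n+1) - ?p n) * (?p n - ?p (n-1)) - (?p (n+1) - ?p (n-1))) - 0)
      = lv_a A B C D P U V (n + 1) t * lv_a A B C D P U V n t
        - lv_a A B C D P U V n t * lv_a A B C D P U V (n - 1) t"
    unfolding lv_a_def by (simp add: algebra_simps)
  show "((\<lambda>s. lv_a A B C D P U V n s) has_vector_derivative
       (lv_a A B C D P U V (n + 1) t * lv_a A B C D P U V n t
        - lv_a A B C D P U V n t * lv_a A B C D P U V (n - 1) t)) (at t within I)"
    using d unfolding e lv_a_def .
qed

end
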